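(* Fix a class $k\in\{1,\dots,K\}$ and a test observation $X_i$. Suppose the class-$k$ training feature vectors $X^k_1,\dots,X^k_{n_k}$ and $X_i$ are exchangeable and that $X_i\sim F_k$. Let $C_o(X_i)$ be the oracle MMDCP prediction set at level $\alpha\in(0,1)$. Then $$\mathbb{P}_k\big(k\in C_o(X_i)\big)\ge 1-\alpha .$$
   Context: Labeled training data $\{(Y_i,X_i)\}_{i=1}^n$ with $Y_i\in\{1,\dots,K\}$, $X_i\in\mathbb{R}^p$; $n_k=\#\{i\le n:Y_i=k\}$ and $X^k_1,\dots,X^k_{n_k}$ are the class-$k$ training feature vectors. Test observations are $X_{n+1},\dots,X_{n+m}$. $F_k$ is the class-$k$ feature distribution with mean $\mu_k$ and positive definite covariance $\Sigma_k$. Oracle score: $s_{ok}(x)=\|(\mathrm{diag}(\Sigma_k))^{-1/2}(x-\mu_k)\|_2^2$. Oracle conformal $p$-value: $p^i_{ok}=\big(1+\sum_{l=1}^{n_k}\mathbb{1}\{s_{ok}(X_i)\le s_{ok}(X^k_l)\}\big)/(n_k+1)$. Oracle MMDCP: for each $k$, if $m=1$, the test point is accepted for class $k$ iff $p^i_{ok}>\lfloor (n_k+1)\alpha\rfloor/(n_k+1)$; if $m>1$, the Benjamini–Hochberg adjusted $p$-values $\tilde p^i_{ok}$ of $\{p^i_{ok}\}_{i=n+1}^{n+m}$ are computed (if $p_{(1)}\le\dots\le p_{(m)}$ are the ordered values, the adjusted value of $p_{(j)}$ is $\min\{1,\min_{l\ge j} m\,p_{(l)}/l\}$), and $X_i$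 is accepted for class $k$ iff $\tilde p^i_{ok}>\lfloor (n_k+1)\alpha\rfloor/(n_k+1)$. The prediction set is $C_o(X_i)=\{k: X_i \text{ accepted for class } k\}$. $\mathbb{P}_k$ denotes probability under the joint law of the data when $X_i\sim F_k$. *)

theory Defs
  imports "HOL-Probability.Probability"
begin

definition oracle_score :: "real^'p \<Rightarrow> real^'p^'p \<Rightarrow> real^'p \<Rightarrow> real" where
  "oracle_score mu Sig x = (norm (\<chi> j. (x$j - mu$j) / sqrt (Sig$j$j)))^2"

definition conf_pval :: "(real^'p \<Rightarrow> real) \<Rightarrow> nat \<Rightarrow> (nat \<Rightarrow> real^'p) \<Rightarrow> real^'p \<Rightarrow> real" where
  "conf_pval s nk cal x =
     (1 + real (card {l \<in> {1..nk}. s x \<le> s (cal l)})) / (real nk + 1)"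

text \<open>Benjamini-Hochberg adjusted p-value of test index i among p 1, ..., p m:
  with ordered values ps!0 <= ... <= ps!(m-1) (i.e. p_(1),...,p_(m)), and p i = p_(j),
  the adjusted value is min{1, min_{l >= j} m p_(l) / l}.  (For ties the value does not
  depend on which position j is chosen; we take the least one.)\<close>
definition bh_adjusted :: "nat \<Rightarrow> (nat \<Rightarrow> real) \<Rightarrow> nat \<Rightarrow> real" where
  "bh_adjusted m p i =
     (let ps = sort (map p [1..<m+1]);
          j = (LEAST j. 1 \<le> j \<and> j \<le> m \<and> ps ! (j - 1) = p i)
      in min 1 (Min ((\<lambda>l. real m * ps ! (l - 1) / real l) ` {j..m})))"

definition mmdcp_accept :: "real \<Rightarrow> nat \<Rightarrow> nat \<Rightarrow> (nat \<Rightarrow> real) \<Rightarrow> nat \<Rightarrow> bool" where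
  "mmdcp_accept \<alpha> nk m pv i =
     (let thr = real_of_int \<lfloor>(real nk + 1) * \<alpha>\<rfloor> / (real nk + 1)
      in if m = 1 then pv i > thr else bh_adjusted m pv i > thr)"

definition oracle_pred_set ::
  "nat \<Rightarrow> real \<Rightarrow> (nat \<Rightarrow> real^'p) \<Rightarrow> (nat \<Rightarrow> real^'p^'p) \<Rightarrow> (nat \<Rightarrow> nat)
   \<Rightarrow> (nat \<Rightarrow> nat \<Rightarrow> real^'p) \<Rightarrow> nat \<Rightarrow> (nat \<Rightarrow> real^'p) \<Rightarrow> nat \<Rightarrow> nat set" where
  "oracle_pred_set K \<alpha> mu Sig ncnt Xtr m Xte i =
     {c \<in> {1..K}. mmdcp_accept \<alpha> (ncnt c) m
        (\<lambda>j. conf_pval (oracle_score (mu c) (Sig c)) (ncnt c) (Xtr c) (Xte j)) i}"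

definition exchangeable :: "'a measure \<Rightarrow> nat \<Rightarrow> (nat \<Rightarrow> 'a \<Rightarrow> 'b::topological_space) \<Rightarrow> bool" where
  "exchangeable M N Z \<longleftrightarrow>
     (\<forall>\<pi>. \<pi> permutes {..<N} \<longrightarrow>
        distr M (PiM {..<N} (\<lambda>_. borel)) (\<lambda>\<omega>. restrict (\<lambda>l. Z (\<pi> l) \<omega>) {..<N})
        = distr M (PiM {..<N} (\<lambda>_. borel)) (\<lambda>\<omega>. restrict (\<lambda>l. Z l \<omega>) {..<N}))"

end

theory Submission
  imports Defs
begin

lemma card_small_rank:
  fixes v :: "nat \<Rightarrow> real"
  assumes "finite L"
  shows "card {j\<in>L. card {l\<in>L-{j}. v j \<le> v l} < t} \<le> t"
proof (rule ccontr)
  let ?S = "{j\<in>L. card {l\<in>L-{j}. v j \<le> v l} < t}"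
  assume "\<not> card ?S \<le> t"
  hence big: "card ?S > t" by simp
  have fin: "finite ?S" using assms by simp
  have ne: "?S \<noteq> {}"
  proof
    assume "?S = {}"
    hence "card ?S = 0" by (simp only: card.empty)
    with big show False by simp
  qed
  obtain j where j: "j \<in> ?S" "\<forall>x\<in>?S. v j \<le> v x"
    using fin ne by (metis (no_types, lifting) arg_min_if_finite(1) arg_min_least linorder_not_le)
  have "?S - {j} \<subseteq> {l\<in>L-{j}. v j \<le> v l}" using j by auto
  hence "card (?S - {j}) \<le> card {l\<in>L-{j}. v j \<le> v l}"
    using assms by (intro card_mono) auto
  moreover have "card (?S - {j}) = card ?S - 1" using j fin by simp
  ultimately show False using j big by auto
qed

lemma bh_ge:
  assumes "i \<in> {1..m}" and "\<And>j. j \<in> {1..m} \<Longrightarrow> 0 \<le> p j" and "p i \<le> 1"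
  shows "p i \<le> bh_adjusted m p i"
proof -
  define ps where "ps = sort (map p [1..<m+1])"
  have len: "length ps = m" by (simp add: ps_def)
  have srt: "sorted ps" by (simp add: ps_def)
  have setps: "set ps = p ` {1..m}" by (auto simp: ps_def)
  have "p i \<in> set ps" using assms(1) setps by auto
  then obtain n where n: "n < m" "ps ! n = p i" by (metis in_set_conv_nth len)
  have ex: "\<exists>j. 1 \<le> j \<and> j \<le> m \<and> ps ! (j - 1) = p i"
    using n by (intro exI[of _ "n+1"]) auto
  define J where "J = (LEAST j. 1 \<le> j \<and> j \<le> m \<and> ps ! (j - 1) = p i)"
  have J: "1 \<le> J" "J \<le> m" "ps ! (J - 1) = p i"
    using LeastI_ex[OF ex] unfolding J_def by auto
  have "p i \<le> Min ((\<lambda>l. real m * ps ! (l - 1) / real l) ` {J..m})"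
  proof (subst Min_ge_iff, simp, use J in simp, intro ballI)
    fix x assume "x \<in> (\<lambda>l. real m * ps ! (l - 1) / real l) ` {J..m}"
    then obtain l where l: "l \<in> {J..m}" "x = real m * ps ! (l - 1) / real l" by auto
    have "ps ! (J - 1) \<le> ps ! (l - 1)"
      using l J srt len by (intro sorted_nth_mono) auto
    moreover have "ps ! (l - 1) \<in> set ps" using l J len by auto
    hence "0 \<le> ps ! (l - 1)" using setps assms(2) by auto
    moreover have "ps ! (l - 1) \<le> real m * ps ! (l - 1) / real l"
    proof -
      have "real l \<le> real m" "0 < real l" using l J by auto
      hence "real l * ps ! (l - 1) \<le> real m * ps ! (l - 1)"
        using \<open>0 \<le> ps ! (l - 1)\<close> by (intro mult_right_mono) auto
      hence "ps ! (l - 1) * real l \<le> real m * ps ! (l - 1)" by (simp only: mult.commute)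
      thus ?thesis using \<open>0 < real l\<close> by (simp add: pos_le_divide_eq)
    qed
    ultimately show "p i \<le> x" using l J by linarith
  qed
  thus ?thesis using assms(3)
    unfolding bh_adjusted_def Let_def ps_def[symmetric] J_def[symmetric] by simp
qed

lemma accept_of_pval:
  assumes "i \<in> {1..m}" and "\<And>j. j \<in> {1..m} \<Longrightarrow> 0 \<le> p j" and "p i \<le> 1"
    and "p i > real_of_int \<lfloor>(real nk + 1) * \<alpha>\<rfloor> / (real nk + 1)"
  shows "mmdcp_accept \<alpha> nk m p i"
  using bh_ge[of i m p] assms unfolding mmdcp_accept_def Let_def by auto

lemma accept_cong:
  assumes "i \<in> {1..m}" and "\<And>j. j \<in> {1..m} \<Longrightarrow> p j = q j"
  shows "mmdcp_accept \<alpha> nk m p i = mmdcp_accept \<alpha> nk m q i"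
proof -
  have e1: "map p [1..<m+1] = map q [1..<m+1]" using assms(2) by auto
  have e2: "p i = q i" using assms by auto
  show ?thesis unfolding mmdcp_accept_def bh_adjusted_def Let_def by (simp only: e1 e2)
qed

lemma card_real_sum: "finite L \<Longrightarrow> real (card {l\<in>L. P l}) = (\<Sum>l\<in>L. if P l then 1 else 0)"
  by (simp add: sum.If_cases Int_def)
lemma score_cont: "continuous_on UNIV (oracle_score mu S)"
  unfolding oracle_score_def divide_inverse by (intro continuous_intros continuous_on_vec_lambda)

lemma borel_card:
  assumes "finite L" "\<And>l. l \<in> L \<Longrightarrow> Measurable.pred M (P l)"
  shows "(\<lambda>x. real (card {l\<in>L. P l x})) \<in> borel_measurable M"
  unfolding card_real_sum[OF assms(1)] using assms(2) by measurable

lemma sets_finite_valued: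
  fixes g :: "nat \<Rightarrow> 'a \<Rightarrow> real"
  assumes "finite I" "finite V" "\<And>j. j \<in> I \<Longrightarrow> g j \<in> borel_measurable M"
    "\<And>j \<omega>. j \<in> I \<Longrightarrow> \<omega> \<in> space M \<Longrightarrow> g j \<omega> \<in> V"
    "\<And>f f'. (\<And>j. j \<in> I \<Longrightarrow> f j = f' j) \<Longrightarrow> Q f = Q f'"
  shows "{\<omega>\<in>space M. Q (\<lambda>j. g j \<omega>)} \<in> sets M"
proof -
  have eq: "{\<omega>\<in>space M. Q (\<lambda>j. g j \<omega>)} =
     (\<Union>f\<in>{f\<in>PiE I (\<lambda>_. V). Q f}. {\<omega>\<in>space M. \<forall>j\<in>I. g j \<omega> = f j})"
  proof safe
    fix \<omega> assume w: "\<omega> \<in> space M" "Q (\<lambda>j. g j \<omega>)"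
    have r: "restrict (\<lambda>j. g j \<omega>) I \<in> {f\<in>PiE I (\<lambda>_. V). Q f}"
      using w assms(4) assms(5)[of "restrict (\<lambda>j. g j \<omega>) I" "\<lambda>j. g j \<omega>"] by auto
    show "\<omega> \<in> (\<Union>f\<in>{f\<in>PiE I (\<lambda>_. V). Q f}. {\<omega>\<in>space M. \<forall>j\<in>I. g j \<omega> = f j})"
      using w by (intro UN_I[OF r]) auto
  next
    fix \<omega> f assume "f \<in> PiE I (\<lambda>_. V)" "Q f" "\<omega> \<in> space M" "\<forall>j\<in>I. g j \<omega> = f j"
    thus "Q (\<lambda>j. g j \<omega>)" using assms(5)[of f "\<lambda>j. g j \<omega>"] by auto
  qed
  have fin: "finite {f\<in>PiE I (\<lambda>_. V). Q f}" using assms(1,2) by (simp add: finite_PiE)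
  show ?thesis unfolding eq
  proof (intro sets.finite_UN[OF fin])
    fix f
    have "Measurable.pred M (\<lambda>\<omega>. \<forall>j\<in>I. g j \<omega> = f j)"
      using assms(1,3) by measurable
    thus "{\<omega>\<in>space M. \<forall>j\<in>I. g j \<omega> = f j} \<in> sets M" by (simp add: pred_def)
  qed
qed

lemma card_perm:
  assumes "\<pi> permutes A" "j \<in> A"
  shows "card {l\<in>A-{j}. P (\<pi> l)} = card {l\<in>A-{\<pi> j}. P l}"
proof -
  have eq: "\<pi> ` {l\<in>A-{j}. P (\<pi> l)} = {l\<in>A-{\<pi> j}. P l}"
  proof
    show "\<pi> ` {l\<in>A-{j}. P (\<pi> l)} \<subseteq> {l\<in>A-{\<pi> j}. P l}"
    proof (rule subsetI, elim imageE)
      fix x l assume l: "l \<in> {l\<in>A-{j}. P (\<pi> l)}" "x = \<pi> l"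
      have "\<pi> l \<in> A" using l assms(1) permutes_in_image[of \<pi> A l] by simp
      moreover have "\<pi> l \<noteq> \<pi> j" using l permutes_inj[OF assms(1)] by (auto dest: injD)
      ultimately show "x \<in> {l\<in>A-{\<pi> j}. P l}" using l by simp
    qed
  next
    show "{l\<in>A-{\<pi> j}. P l} \<subseteq> \<pi> ` {l\<in>A-{j}. P (\<pi> l)}"
    proof
      fix x assume x: "x \<in> {l\<in>A-{\<pi> j}. P l}"
      define y where "y = inv \<pi> x"
      have y: "\<pi> y = x" unfolding y_def using permutes_inverses(1)[OF assms(1)] by simp
      have "y \<in> A" using x y assms(1) permutes_in_image[of \<pi> A y] by simp
      moreover have "y \<noteq> j" using x y by auto
      ultimately show "x \<in> \<pi> ` {l\<in>A-{j}. P (\<pi> l)}" using x y by auto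
    qed
  qed
  have "inj_on \<pi> {l\<in>A-{j}. P (\<pi> l)}"
    by (rule inj_on_subset[OF permutes_inj[OF assms(1)]]) simp
  from card_image[OF this] eq show ?thesis by simp
qed
theorem corollary1:
  fixes M :: "'a measure"
    and F :: "nat \<Rightarrow> (real^'p) measure"
    and mu :: "nat \<Rightarrow> real^'p" and Sig :: "nat \<Rightarrow> real^'p^'p"
    and ncnt :: "nat \<Rightarrow> nat"
    and Xtr :: "nat \<Rightarrow> nat \<Rightarrow> 'a \<Rightarrow> real^'p"
    and Xte :: "nat \<Rightarrow> 'a \<Rightarrow> real^'p"
    and K k m i :: nat and \<alpha> :: real
  assumes "prob_space M"
    and "k \<in> {1..K}" and "i \<in> {1..m}"
    and "0 < \<alpha>" and "\<alpha> < 1"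
    and "\<And>c l. Xtr c l \<in> borel_measurable M"
    and "\<And>j. Xte j \<in> borel_measurable M"
    and "\<And>c. c \<in> {1..K} \<Longrightarrow> prob_space (F c)"
    and "\<And>c. c \<in> {1..K} \<Longrightarrow> sets (F c) = sets borel"
    and "\<And>c j. c \<in> {1..K} \<Longrightarrow> integrable (F c) (\<lambda>x. (x$j)^2)"
    and "\<And>c j. c \<in> {1..K} \<Longrightarrow> mu c $ j = (\<integral>x. x$j \<partial>F c)"
    and "\<And>c a b. c \<in> {1..K} \<Longrightarrow>
           Sig c $ a $ b = (\<integral>x. (x$a - mu c $ a) * (x$b - mu c $ b) \<partial>F c)"
    and "\<And>c v. c \<in> {1..K} \<Longrightarrow> v \<noteq> 0 \<Longrightarrow> 0 < v \<bullet> (Sig c *v v)"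
    and "exchangeable M (ncnt k + 1)
           (\<lambda>l. if l < ncnt k then Xtr k (Suc l) else Xte i)"
    and "distr M borel (Xte i) = F k"
  shows "measure M {\<omega> \<in> space M.
            k \<in> oracle_pred_set K \<alpha> mu Sig ncnt (\<lambda>c l. Xtr c l \<omega>) m (\<lambda>j. Xte j \<omega>) i}
         \<ge> 1 - \<alpha>"
proof -
  interpret P: prob_space M by fact
  define nk where "nk = ncnt k"
  define N where "N = nk + 1"
  define s where "s = oracle_score (mu k) (Sig k)"
  define Z where "Z = (\<lambda>l. if l < ncnt k then Xtr k (Suc l) else Xte i)"
  define cnt :: "(nat \<Rightarrow> real^'p) \<Rightarrow> nat \<Rightarrow> nat"
    where "cnt z j = card {l\<in>{..<N}-{j}. s (z j) \<le> s (z l)}" for z j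
  define t where "t = nat \<lfloor>real N * \<alpha>\<rfloor>"
  define B where "B j = {\<omega>\<in>space M. cnt (\<lambda>l. Z l \<omega>) j < t}" for j
  define pv where "pv j \<omega> = conf_pval s nk (\<lambda>l. Xtr k l \<omega>) (Xte j \<omega>)" for j \<omega>
  define PB where "PB = PiM {..<N} (\<lambda>_. borel :: (real^'p) measure)"
  have s_meas[measurable]: "s \<in> borel_measurable borel"
    unfolding s_def by (rule borel_measurable_continuous_onI[OF score_cont])
  have Z_meas[measurable]: "Z l \<in> borel_measurable M" for l
    unfolding Z_def using assms(6,7) by simp
  have B_sets: "B j \<in> sets M" for j
  proof -
    have "(\<lambda>\<omega>. real (cnt (\<lambda>l. Z l \<omega>) j)) \<in> borel_measurable M"
      unfolding cnt_def by (intro borel_card) measurable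
    hence "{\<omega>\<in>space M. real (cnt (\<lambda>l. Z l \<omega>) j) < real t} \<in> sets M" by measurable
    thus ?thesis unfolding B_def by simp
  qed
  have exch: "distr M PB (\<lambda>\<omega>. restrict (\<lambda>l. Z (\<pi> l) \<omega>) {..<N})
              = distr M PB (\<lambda>\<omega>. restrict (\<lambda>l. Z l \<omega>) {..<N})" if "\<pi> permutes {..<N}" for \<pi>
    using assms(14) that unfolding exchangeable_def Z_def N_def nk_def PB_def by blast
  define S where "S = {z \<in> space PB. cnt z nk < t}"
  have S_sets: "S \<in> sets PB"
  proof -
    have comp: "(\<lambda>z. s (z l)) \<in> borel_measurable PB" if "l < N" for l
      unfolding PB_def
      by (rule measurable_compose[OF measurable_component_singleton[of l "{..<N}" "\<lambda>_. borel"] s_meas]) (use that in simp)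
    have "(\<lambda>z. real (cnt z nk)) \<in> borel_measurable PB"
      unfolding cnt_def
    proof (intro borel_card)
      fix l assume "l \<in> {..<N} - {nk}"
      hence "l < N" "nk < N" unfolding N_def by auto
      show "Measurable.pred PB (\<lambda>z. s (z nk) \<le> s (z l))"
        unfolding pred_def
        using borel_measurable_le[OF comp[OF \<open>nk < N\<close>] comp[OF \<open>l < N\<close>]] by simp
    qed simp
    hence "{z \<in> space PB. real (cnt z nk) < real t} \<in> sets PB" by measurable
    thus ?thesis unfolding S_def by simp
  qed
  have Bpi: "B (\<pi> nk) = (\<lambda>\<omega>. restrict (\<lambda>l. Z (\<pi> l) \<omega>) {..<N}) -` S \<inter> space M"
    if pi: "\<pi> permutes {..<N}" for \<pi>
  proof -
    have nkN: "nk \<in> {..<N}" unfolding N_def by simp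
    have msr: "(\<lambda>\<omega>. restrict (\<lambda>l. Z (\<pi> l) \<omega>) {..<N}) \<in> M \<rightarrow>\<^sub>M PB"
      unfolding PB_def by (intro measurable_restrict) simp
    have c: "cnt (restrict (\<lambda>l. Z (\<pi> l) \<omega>) {..<N}) nk = cnt (\<lambda>l. Z l \<omega>) (\<pi> nk)" for \<omega>
    proof -
      have "cnt (restrict (\<lambda>l. Z (\<pi> l) \<omega>) {..<N}) nk
          = card {l\<in>{..<N}-{nk}. s (Z (\<pi> nk) \<omega>) \<le> s (Z (\<pi> l) \<omega>)}"
        unfolding cnt_def using nkN by (intro arg_cong[where f=card]) auto
      also have "\<dots> = card {l\<in>{..<N}-{\<pi> nk}. s (Z (\<pi> nk) \<omega>) \<le> s (Z l \<omega>)}"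
        by (rule card_perm[OF pi nkN])
      finally show ?thesis unfolding cnt_def .
    qed
    show ?thesis
      using measurable_space[OF msr] unfolding B_def S_def by (auto simp: c)
  qed
  have Bnk: "B nk = (\<lambda>\<omega>. restrict (\<lambda>l. Z l \<omega>) {..<N}) -` S \<inter> space M"
    using Bpi[OF permutes_id] by simp
  have Beq: "measure M (B j) = measure M (B nk)" if "j < N" for j
  proof -
    define \<pi> where "\<pi> = Transposition.transpose j nk"
    have pi: "\<pi> permutes {..<N}" unfolding \<pi>_def using that
      by (intro permutes_swap_id) (auto simp: N_def)
    have "\<pi> nk = j" unfolding \<pi>_def by simp
    have m1: "(\<lambda>\<omega>. restrict (\<lambda>l. Z (\<pi> l) \<omega>) {..<N}) \<in> M \<rightarrow>\<^sub>M PB"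
      unfolding PB_def by (intro measurable_restrict) simp
    have m2: "(\<lambda>\<omega>. restrict (\<lambda>l. Z l \<omega>) {..<N}) \<in> M \<rightarrow>\<^sub>M PB"
      unfolding PB_def by (intro measurable_restrict) simp
    have "measure M (B j) = measure (distr M PB (\<lambda>\<omega>. restrict (\<lambda>l. Z (\<pi> l) \<omega>) {..<N})) S"
      using Bpi[OF pi] \<open>\<pi> nk = j\<close> measure_distr[OF m1 S_sets] by simp
    also have "\<dots> = measure (distr M PB (\<lambda>\<omega>. restrict (\<lambda>l. Z l \<omega>) {..<N})) S"
      using exch[OF pi] by simp
    also have "\<dots> = measure M (B nk)"
      using Bnk measure_distr[OF m2 S_sets] by simp
    finally show ?thesis .
  qed
  have sumle: "(\<Sum>j<N. indicator (B j) \<omega>) \<le> real t" if w: "\<omega> \<in> space M" for \<omega>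
  proof -
    have "(\<Sum>j<N. indicator (B j) \<omega> :: real) = (\<Sum>j<N. if cnt (\<lambda>l. Z l \<omega>) j < t then 1 else 0)"
      using w by (intro sum.cong) (auto simp: B_def indicator_def)
    also have "\<dots> = real (card {j\<in>{..<N}. cnt (\<lambda>l. Z l \<omega>) j < t})"
      by (rule card_real_sum[symmetric]) simp
    also have "card {j\<in>{..<N}. cnt (\<lambda>l. Z l \<omega>) j < t} \<le> t"
      unfolding cnt_def by (rule card_small_rank) simp
    finally show ?thesis by simp
  qed
  have "real N * measure M (B nk) = (\<Sum>j<N. measure M (B j))"
    using Beq by simp
  also have "\<dots> = (\<integral>\<omega>. (\<Sum>j<N. indicator (B j) \<omega>) \<partial>M)"
  proof -
    have "(\<integral>\<omega>. (\<Sum>j<N. indicator (B j) \<omega> :: real) \<partial>M) = (\<Sum>j<N. (\<integral>\<omega>. indicator (B j) \<omega> \<partial>M))"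
      by (rule Bochner_Integration.integral_sum) (use B_sets in \<open>auto intro!: integrable_real_indicator simp: less_top[symmetric] P.emeasure_finite\<close>)
    also have "\<dots> = (\<Sum>j<N. measure M (B j))"
      using B_sets by (intro sum.cong) (auto simp: Int_absorb2 sets.sets_into_space)
    finally show ?thesis by simp
  qed
  also have "\<dots> \<le> real t"
    by (rule P.integral_le_const) (use B_sets sumle in \<open>auto intro!: AE_I2 integrable_real_indicator simp: less_top[symmetric] P.emeasure_finite\<close>)
  also have "real t \<le> real N * \<alpha>"
    unfolding t_def using assms(4) by (simp add: N_def)
  finally have mB: "measure M (B nk) \<le> \<alpha>"
    unfolding N_def by (simp add: mult_le_cancel_left_pos)
  have pv_le1: "pv j \<omega> \<le> 1" and pv_ge0: "0 \<le> pv j \<omega>" for j \<omega>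
  proof -
    have "card {l\<in>{1..nk}. s (Xte j \<omega>) \<le> s (Xtr k l \<omega>)} \<le> card {1..nk}"
      by (rule card_mono) auto
    hence "card {l\<in>{1..nk}. s (Xte j \<omega>) \<le> s (Xtr k l \<omega>)} \<le> nk" by simp
    thus "pv j \<omega> \<le> 1" "0 \<le> pv j \<omega>" unfolding pv_def conf_pval_def by auto
  qed
  have pv_eq: "pv i \<omega> = (1 + real (cnt (\<lambda>l. Z l \<omega>) nk)) / (real nk + 1)" for \<omega>
  proof -
    have "{l\<in>{1..nk}. s (Xte i \<omega>) \<le> s (Xtr k l \<omega>)}
        = Suc ` {l\<in>{..<N}-{nk}. s (Z nk \<omega>) \<le> s (Z l \<omega>)}"
    proof -
      have "{l\<in>{..<N}-{nk}. s (Z nk \<omega>) \<le> s (Z l \<omega>)} = {l. l < nk \<and> s (Xte i \<omega>) \<le> s (Xtr k (Suc l) \<omega>)}"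
        unfolding Z_def N_def nk_def by auto
      moreover have "{l\<in>{1..nk}. s (Xte i \<omega>) \<le> s (Xtr k l \<omega>)} = Suc ` {l. l < nk \<and> s (Xte i \<omega>) \<le> s (Xtr k (Suc l) \<omega>)}"
      proof safe
        fix x assume "x \<in> {1..nk}" "s (Xte i \<omega>) \<le> s (Xtr k x \<omega>)"
        thus "x \<in> Suc ` {l. l < nk \<and> s (Xte i \<omega>) \<le> s (Xtr k (Suc l) \<omega>)}"
          by (intro image_eqI[of _ _ "x - 1"]) auto
      qed auto
      ultimately show ?thesis by simp
    qed
    hence "card {l\<in>{1..nk}. s (Xte i \<omega>) \<le> s (Xtr k l \<omega>)} = cnt (\<lambda>l. Z l \<omega>) nk"
      unfolding cnt_def by (simp add: card_image)
    thus ?thesis unfolding pv_def conf_pval_def by simp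
  qed
  define E where "E = {\<omega> \<in> space M. k \<in> oracle_pred_set K \<alpha> mu Sig ncnt (\<lambda>c l. Xtr c l \<omega>) m (\<lambda>j. Xte j \<omega>) i}"
  have E_eq: "E = {\<omega> \<in> space M. mmdcp_accept \<alpha> nk m (\<lambda>j. pv j \<omega>) i}"
    unfolding E_def oracle_pred_set_def pv_def s_def nk_def using assms(2) by auto
  have E_sets: "E \<in> sets M"
    unfolding E_eq
  proof (rule sets_finite_valued[where V = "(\<lambda>c. (1 + real c) / (real nk + 1)) ` {0..nk}" and I = "{1..m}"])
    fix j assume "j \<in> {1..m}"
    have "(\<lambda>\<omega>. real (card {l\<in>{1..nk}. s (Xte j \<omega>) \<le> s (Xtr k l \<omega>)})) \<in> borel_measurable M"
      by (intro borel_card) (use assms(6,7) in measurable)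
    thus "pv j \<in> borel_measurable M" unfolding pv_def conf_pval_def by measurable
  next
    fix j \<omega>
    have "card {l\<in>{1..nk}. s (Xte j \<omega>) \<le> s (Xtr k l \<omega>)} \<le> card {1..nk}"
      by (rule card_mono) auto
    thus "pv j \<omega> \<in> (\<lambda>c. (1 + real c) / (real nk + 1)) ` {0..nk}"
      unfolding pv_def conf_pval_def by auto
  next
    fix f f' :: "nat \<Rightarrow> real" assume "\<And>j. j \<in> {1..m} \<Longrightarrow> f j = f' j"
    thus "mmdcp_accept \<alpha> nk m f i = mmdcp_accept \<alpha> nk m f' i"
      by (rule accept_cong[OF assms(3)])
  qed auto
  have sub: "space M - B nk \<subseteq> E"
  proof
    fix \<omega> assume w: "\<omega> \<in> space M - B nk"
    hence ge: "t \<le> cnt (\<lambda>l. Z l \<omega>) nk" unfolding B_def by auto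
    have "real_of_int \<lfloor>(real nk + 1) * \<alpha>\<rfloor> \<le> real t"
      unfolding t_def N_def by (simp add: add.commute)
    also have "\<dots> < 1 + real (cnt (\<lambda>l. Z l \<omega>) nk)" using ge by simp
    finally have "real_of_int \<lfloor>(real nk + 1) * \<alpha>\<rfloor> / (real nk + 1) < pv i \<omega>"
      unfolding pv_eq by (simp add: divide_strict_right_mono)
    hence "mmdcp_accept \<alpha> nk m (\<lambda>j. pv j \<omega>) i"
      by (intro accept_of_pval[OF assms(3)]) (auto simp: pv_ge0 pv_le1)
    thus "\<omega> \<in> E" unfolding E_eq using w by auto
  qed
  have "1 - \<alpha> \<le> 1 - measure M (B nk)" using mB by simp
  also have "\<dots> = measure M (space M - B nk)" using P.prob_compl[OF B_sets] by simp
  also have "\<dots> \<le> measure M E" by (rule P.finite_measure_mono[OF sub E_sets])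
  finally show ?thesis unfolding E_def .
qed

end
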